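(* Let $\tau$ be a topology on a set $X$. For each $A \in \tau$ let $d_A : X \times X \to [0,\infty)$ be the characteristic function of the complement of $A\times A$ in $X \times X$, and let $\mathscr{P}_\tau := \{d_A : A \in \tau\}$. Then the topology on $X$ defined by $\mathscr{P}_\tau$, i.e. the topology generated by the family of sets $$U_{d_A,\varepsilon}(x) := \{\xi \in X : d_A(\xi,x) < \varepsilon\}, \quad A \in \tau,\ x \in X,\ \varepsilon \in \mathbb{R},\ \varepsilon > d_A(x,x),$$ coincides with $\tau$.
   Context: A weak pseudo-metric on $X$ is a symmetric map $d: X\times X\to[0,\infty)$ satisfying $d(x_1,x_2)\le d(x_1,x)+d(x,x_2)$ for all $x,x_1,x_2\in X$ and vanishing at at least one point of the diagonal of $X\times X$ (not necessarily on the whole diagonal). For a family $\mathscr{P}$ of such maps, the topology defined by $\mathscr{P}$ is the topology generated (as a subbase) by the sets $U_{d,\varepsilon}(x)=\{\xi\in X: d(\xi,x)<\varepsilon\}$ with $d\in\mathscr{P}$, $x\in X$, and real $\varepsilon>d(x,x)$. *)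

theory Defs
  imports "HOL-Analysis.Analysis"
begin

text \<open>Characteristic function of the complement of A \<times> A (values outside X \<times> X are irrelevant).\<close>
definition char_dist :: "'a set \<Rightarrow> 'a \<Rightarrow> 'a \<Rightarrow> real" where
  "char_dist A x y = (if x \<in> A \<and> y \<in> A then 0 else 1)"

definition wball :: "'a set \<Rightarrow> ('a \<Rightarrow> 'a \<Rightarrow> real) \<Rightarrow> real \<Rightarrow> 'a \<Rightarrow> 'a set" where
  "wball X d \<epsilon> x = {\<xi> \<in> X. d \<xi> x < \<epsilon>}"

text \<open>The topology on X defined by a family P: generated by the sets U_{d,eps}(x)
  as a subbase (X itself added, as the empty finite intersection).\<close>
definition topology_defined_by :: "'a set \<Rightarrow> ('a \<Rightarrow> 'a \<Rightarrow> real) set \<Rightarrow> 'a topology" where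
  "topology_defined_by X P =
     topology_generated_by (insert X {wball X d \<epsilon> x | d \<epsilon> x. d \<in> P \<and> x \<in> X \<and> \<epsilon> > d x x})"

end

theory Submission
  imports Defs
begin

theorem theorem4p1:
  fixes T :: "'a topology"
  shows "topology_defined_by (topspace T) {char_dist A | A. openin T A} = T"
proof -
  let ?X = "topspace T"
  let ?S = "insert ?X {wball ?X d \<epsilon> x | d \<epsilon> x. d \<in> {char_dist A | A. openin T A} \<and> x \<in> ?X \<and> \<epsilon> > d x x}"
  have sub: "openin T U" if "U \<in> ?S" for U
  proof -
    have key: "openin T (wball ?X (char_dist A) \<epsilon> x)" if A: "openin T A" for A \<epsilon> x
    proof -
      have "wball ?X (char_dist A) \<epsilon> x = (if \<epsilon> > 1 then ?X else if \<epsilon> > 0 \<and> x \<in> A then ?X \<inter> A else {})"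
        by (auto simp: wball_def char_dist_def)
      thus ?thesis using A by auto
    qed
    show ?thesis using that key by auto
  qed
  have gen1: "openin T U" if "generate_topology_on ?S U" for U
    using that
  proof induct
    case (Basis s) thus ?case by (rule sub)
  qed auto
  have gen2: "generate_topology_on ?S U" if U: "openin T U" for U
  proof (cases "U = {}")
    case True thus ?thesis by (simp add: generate_topology_on.Empty)
  next
    case False
    then obtain x where x: "x \<in> U" by auto
    have Ux: "U \<subseteq> ?X" using U openin_subset by blast
    have "U = wball ?X (char_dist U) (1/2) x"
      using x Ux by (auto simp: wball_def char_dist_def)
    moreover have "char_dist U x x < 1/2" using x by (simp add: char_dist_def)
    ultimately have "U \<in> ?S" using U x Ux by blast
    thus ?thesis by (rule generate_topology_on.Basis)
  qed
  show ?thesis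
    unfolding topology_defined_by_def topology_eq openin_topology_generated_by_iff
    using gen1 gen2 by blast
qed

end
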